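(* Let $\mathcal M=(M,<,+,0,\ldots)$ be a definably complete locally o-minimal expansion of an ordered group. Let $(G,\tau)$ be a definable topological group which is definably simple, and which, as a definable topological space, is regular, Hausdorff and definably compact. Then $(G,\tau)$ is either discrete or definably connected in the topology $\tau$.
   Context: "Definable" means definable in $\mathcal M$ with parameters. $\mathcal M$ is an expansion of an ordered group $(M,<,+,0)$ whose order is dense without endpoints. It is locally o-minimal if for every definable $X\subseteq M$ and every $a\in M$ there is an open interval $I\ni a$ such that $X\cap I$ is a finite union of points and open intervals; it is definably complete if every definable subset of $M$ has a supremum and an infimum in $M\cup\{\pm\infty\}$. A family $\{S_t: t\in T\}$ of sets is definable if $T$ and $\bigcup_{t\in T}\{t\}\times S_t$ are definable. A definable topological space is a definable set $X$ with a topology admitting a definable family of sets as an open base. A family $\mathcal F$ of sets is filtered if for $B_1,B_2\in\mathcal F$ there is $B_3\in\mathcal F$ with $B_3\subseteq B_1\cap B_2$. A definable topological space is definably compact if every definable filtered family of nonempty closed subsets has nonempty intersection. A definable group is a group whose underlying set and multiplication are definable; a definable topological group is a definable group with a definable topology in which multiplication and inversion are continuous. It is definably simple if it has no nontrivial definable normal subgroup. A definable set is definably connected (in a definable topology) if it has no definable subset, other than the empty set and itself, that is both open and closed. *)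

theory Defs
  imports "HOL-Analysis.Analysis" "HOL-Algebra.Group" "HOL-Algebra.Coset"
begin

text \<open>M^n is represented by lists of length n over the type 'm.
  A first-order structure on M (in the sense of van den Dries) is a family S,
  S n being the definable (with parameters) subsets of M^n.\<close>

definition is_structure :: "(nat \<Rightarrow> 'm list set set) \<Rightarrow> bool" where
  "is_structure S \<longleftrightarrow>
    (\<forall>n. \<forall>A\<in>S n. \<forall>x\<in>A. length x = n) \<and>
    (\<forall>n. {} \<in> S n) \<and>
    (\<forall>n. \<forall>A\<in>S n. \<forall>B\<in>S n. A \<union> B \<in> S n) \<and>
    (\<forall>n. \<forall>A\<in>S n. {x. length x = n \<and> x \<notin> A} \<in> S n) \<and>
    (\<forall>n. \<forall>A\<in>S n. {x @ [a] | x a. x \<in> A} \<in> S (Suc n)) \<and>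
    (\<forall>n. \<forall>A\<in>S n. {a # x | x a. x \<in> A} \<in> S (Suc n)) \<and>
    (\<forall>n i j. i < n \<longrightarrow> j < n \<longrightarrow> {x. length x = n \<and> x ! i = x ! j} \<in> S n) \<and>
    (\<forall>n. \<forall>A\<in>S (Suc n). butlast ` A \<in> S n)"

definition expansion_of_ordered_group :: "(nat \<Rightarrow> ('m::{plus,ord}) list set set) \<Rightarrow> bool" where
  "expansion_of_ordered_group S \<longleftrightarrow> is_structure S \<and>
    (\<forall>a. {[a]} \<in> S 1) \<and>
    {[a, b] | a b. a < b} \<in> S 2 \<and>
    {[a, b, a + b] | a b. True} \<in> S 3"

definition unary :: "'m list set \<Rightarrow> 'm set" where
  "unary X = {a. [a] \<in> X}"

definition definably_complete :: "(nat \<Rightarrow> ('m::linorder) list set set) \<Rightarrow> bool" where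
  "definably_complete S \<longleftrightarrow> (\<forall>X\<in>S 1.
     (unary X \<noteq> {} \<and> bdd_above (unary X) \<longrightarrow>
        (\<exists>s. (\<forall>x\<in>unary X. x \<le> s) \<and> (\<forall>b. (\<forall>x\<in>unary X. x \<le> b) \<longrightarrow> s \<le> b))) \<and>
     (unary X \<noteq> {} \<and> bdd_below (unary X) \<longrightarrow>
        (\<exists>s. (\<forall>x\<in>unary X. s \<le> x) \<and> (\<forall>b. (\<forall>x\<in>unary X. b \<le> x) \<longrightarrow> b \<le> s))))"

definition finite_union_points_intervals :: "('m::linorder) set \<Rightarrow> bool" where
  "finite_union_points_intervals Y \<longleftrightarrow>
    (\<exists>P Q. finite P \<and> finite Q \<and> Y = P \<union> (\<Union>(a, b)\<in>Q. {a<..<b}))"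

definition locally_o_minimal :: "(nat \<Rightarrow> ('m::linorder) list set set) \<Rightarrow> bool" where
  "locally_o_minimal S \<longleftrightarrow> (\<forall>X\<in>S 1. \<forall>a. \<exists>l u. l < a \<and> a < u \<and>
     finite_union_points_intervals (unary X \<inter> {l<..<u}))"

definition definable_family ::
    "(nat \<Rightarrow> 'm list set set) \<Rightarrow> nat \<Rightarrow> nat \<Rightarrow> 'm list set \<Rightarrow> ('m list \<Rightarrow> 'm list set) \<Rightarrow> bool" where
  "definable_family S k n T F \<longleftrightarrow> T \<in> S k \<and> {t @ x | t x. t \<in> T \<and> x \<in> F t} \<in> S (k + n)"

definition definable_topology ::
    "(nat \<Rightarrow> 'm list set set) \<Rightarrow> nat \<Rightarrow> 'm list set \<Rightarrow> 'm list topology \<Rightarrow> bool" where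
  "definable_topology S n G \<tau> \<longleftrightarrow> G \<in> S n \<and> topspace \<tau> = G \<and>
    (\<exists>k T B. definable_family S k n T B \<and>
       (\<forall>t\<in>T. openin \<tau> (B t)) \<and>
       (\<forall>U. openin \<tau> U \<longrightarrow> (\<forall>x\<in>U. \<exists>t\<in>T. x \<in> B t \<and> B t \<subseteq> U)))"

definition definably_compact ::
    "(nat \<Rightarrow> 'm list set set) \<Rightarrow> nat \<Rightarrow> 'm list topology \<Rightarrow> bool" where
  "definably_compact S n \<tau> \<longleftrightarrow>
    (\<forall>k T C. definable_family S k n T C \<and>
       (\<forall>t\<in>T. closedin \<tau> (C t) \<and> C t \<noteq> {}) \<and>
       (\<forall>t1\<in>T. \<forall>t2\<in>T. \<exists>t3\<in>T. C t3 \<subseteq> C t1 \<inter> C t2)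
       \<longrightarrow> (\<Inter>t\<in>T. C t) \<noteq> {})"

definition definably_connected ::
    "(nat \<Rightarrow> 'm list set set) \<Rightarrow> nat \<Rightarrow> 'm list topology \<Rightarrow> bool" where
  "definably_connected S n \<tau> \<longleftrightarrow>
    (\<forall>A. A \<in> S n \<and> A \<subseteq> topspace \<tau> \<and> openin \<tau> A \<and> closedin \<tau> A
       \<longrightarrow> A = {} \<or> A = topspace \<tau>)"

abbreviation grp :: "'m list set \<Rightarrow> ('m list \<Rightarrow> 'm list \<Rightarrow> 'm list) \<Rightarrow> 'm list \<Rightarrow> 'm list monoid" where
  "grp G mul e \<equiv> \<lparr>carrier = G, monoid.mult = mul, one = e\<rparr>"

definition definable_group ::
    "(nat \<Rightarrow> 'm list set set) \<Rightarrow> nat \<Rightarrow> 'm list set \<Rightarrow> ('m list \<Rightarrow> 'm list \<Rightarrow> 'm list) \<Rightarrow> 'm list \<Rightarrow> bool" where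
  "definable_group S n G mul e \<longleftrightarrow> group (grp G mul e) \<and> G \<in> S n \<and>
     {x @ y @ mul x y | x y. x \<in> G \<and> y \<in> G} \<in> S (n + n + n)"

definition definable_topological_group ::
    "(nat \<Rightarrow> 'm list set set) \<Rightarrow> nat \<Rightarrow> 'm list set \<Rightarrow> ('m list \<Rightarrow> 'm list \<Rightarrow> 'm list) \<Rightarrow> 'm list
      \<Rightarrow> 'm list topology \<Rightarrow> bool" where
  "definable_topological_group S n G mul e \<tau> \<longleftrightarrow>
     definable_group S n G mul e \<and> definable_topology S n G \<tau> \<and>
     continuous_map (prod_topology \<tau> \<tau>) \<tau> (\<lambda>(x, y). mul x y) \<and>
     continuous_map \<tau> \<tau> (\<lambda>x. inv\<^bsub>grp G mul e\<^esub> x)"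

definition definably_simple ::
    "(nat \<Rightarrow> 'm list set set) \<Rightarrow> nat \<Rightarrow> 'm list set \<Rightarrow> ('m list \<Rightarrow> 'm list \<Rightarrow> 'm list) \<Rightarrow> 'm list \<Rightarrow> bool" where
  "definably_simple S n G mul e \<longleftrightarrow>
     (\<forall>H. H \<in> S n \<and> normal H (grp G mul e) \<longrightarrow> H = {e} \<or> H = G)"

end

theory Submission
  imports Defs
begin
lemma st_len: assumes "is_structure S" "A \<in> S n" "x \<in> A" shows "length x = n"
proof -
  have "\<forall>n. \<forall>A\<in>S n. \<forall>x\<in>A. length x = n" using assms(1) unfolding is_structure_def by (rule conjunct1)
  then show ?thesis using assms(2,3) by blast
qed
lemma st_empty: assumes "is_structure S" shows "{} \<in> S n"
proof -
  have "\<forall>n. {} \<in> S n" using assms(1) unfolding is_structure_def by (rule conjunct2[THEN conjunct1])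
  then show ?thesis by blast
qed
lemma st_un: assumes "is_structure S" "A \<in> S n" "B \<in> S n" shows "A \<union> B \<in> S n"
proof -
  have "\<forall>n. \<forall>A\<in>S n. \<forall>B\<in>S n. A \<union> B \<in> S n" using assms(1) unfolding is_structure_def by (rule conjunct2[THEN conjunct2, THEN conjunct1])
  then show ?thesis using assms(2,3) by blast
qed
lemma st_compl: assumes "is_structure S" "A \<in> S n" shows "{x. length x = n \<and> x \<notin> A} \<in> S n"
proof -
  have "\<forall>n. \<forall>A\<in>S n. {x. length x = n \<and> x \<notin> A} \<in> S n" using assms(1) unfolding is_structure_def by (rule conjunct2[THEN conjunct2, THEN conjunct2, THEN conjunct1])
  then show ?thesis using assms(2) by blast
qed
lemma st_back: assumes "is_structure S" "A \<in> S n" shows "{x @ [a] | x a. x \<in> A} \<in> S (Suc n)"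
proof -
  have "\<forall>n. \<forall>A\<in>S n. {x @ [a] | x a. x \<in> A} \<in> S (Suc n)" using assms(1) unfolding is_structure_def by (rule conjunct2[THEN conjunct2, THEN conjunct2, THEN conjunct2, THEN conjunct1])
  then show ?thesis using assms(2) by blast
qed
lemma st_front: assumes "is_structure S" "A \<in> S n" shows "{a # x | x a. x \<in> A} \<in> S (Suc n)"
proof -
  have "\<forall>n. \<forall>A\<in>S n. {a # x | x a. x \<in> A} \<in> S (Suc n)" using assms(1) unfolding is_structure_def by (rule conjunct2[THEN conjunct2, THEN conjunct2, THEN conjunct2, THEN conjunct2, THEN conjunct1])
  then show ?thesis using assms(2) by blast
qed
lemma st_diag: assumes "is_structure S" "i < n" "j < n" shows "{x. length x = n \<and> x ! i = x ! j} \<in> S n"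
proof -
  have "\<forall>n i j. i < n \<longrightarrow> j < n \<longrightarrow> {x. length x = n \<and> x ! i = x ! j} \<in> S n" using assms(1) unfolding is_structure_def by (rule conjunct2[THEN conjunct2, THEN conjunct2, THEN conjunct2, THEN conjunct2, THEN conjunct2, THEN conjunct1])
  then show ?thesis using assms(2,3) by blast
qed
lemma st_proj: assumes "is_structure S" "A \<in> S (Suc n)" shows "butlast ` A \<in> S n"
proof -
  have "\<forall>n. \<forall>A\<in>S (Suc n). butlast ` A \<in> S n" using assms(1) unfolding is_structure_def by (rule conjunct2[THEN conjunct2, THEN conjunct2, THEN conjunct2, THEN conjunct2, THEN conjunct2, THEN conjunct2])
  then show ?thesis using assms(2) by blast
qed


definition dfn :: "(nat \<Rightarrow> 'm list set set) \<Rightarrow> nat \<Rightarrow> ('m list \<Rightarrow> bool) \<Rightarrow> bool" where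
  "dfn S m P \<longleftrightarrow> {x. length x = m \<and> P x} \<in> S m"

lemma dfn_cong: "(\<And>x. length x = m \<Longrightarrow> P x = Q x) \<Longrightarrow> dfn S m P = dfn S m Q"
proof -
  assume "\<And>x. length x = m \<Longrightarrow> P x = Q x"
  then have "{x. length x = m \<and> P x} = {x. length x = m \<and> Q x}" by auto
  then show ?thesis unfolding dfn_def by (rule arg_cong)
qed

lemma dfn_mono: "dfn S m P \<Longrightarrow> (\<And>x. length x = m \<Longrightarrow> P x = Q x) \<Longrightarrow> dfn S m Q"
  using dfn_cong by blast

lemma dfn_I: assumes "X \<in> S m" "X = {x. length x = m \<and> P x}" shows "dfn S m P"
  using assms(1) unfolding dfn_def assms(2) .

lemma dfn_set: assumes "is_structure S" "A \<in> S m" shows "dfn S m (\<lambda>x. x \<in> A)"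
proof -
  have "\<forall>x\<in>A. length x = m" using st_len[OF assms(1,2)] by blast
  then have eq: "{x. length x = m \<and> x \<in> A} = A" by auto
  show ?thesis unfolding dfn_def eq by (rule assms(2))
qed

lemma set_dfn: "dfn S m P \<Longrightarrow> {x. length x = m \<and> P x} \<in> S m"
  by (simp add: dfn_def)

lemma dfn_or: assumes "is_structure S" "dfn S m P" "dfn S m Q" shows "dfn S m (\<lambda>x. P x \<or> Q x)"
proof -
  have "{x. length x = m \<and> P x} \<union> {x. length x = m \<and> Q x} \<in> S m"
    using st_un[OF assms(1)] assms(2,3) unfolding dfn_def by blast
  moreover have "{x. length x = m \<and> P x} \<union> {x. length x = m \<and> Q x} = {x. length x = m \<and> (P x \<or> Q x)}" by auto
  ultimately show ?thesis by (rule dfn_I)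
qed

lemma dfn_not: assumes "is_structure S" "dfn S m P" shows "dfn S m (\<lambda>x. \<not> P x)"
proof -
  have "{x. length x = m \<and> x \<notin> {x. length x = m \<and> P x}} \<in> S m"
    using st_compl[OF assms(1)] assms(2) unfolding dfn_def by blast
  moreover have "{x. length x = m \<and> x \<notin> {x. length x = m \<and> P x}} = {x. length x = m \<and> \<not> P x}" by auto
  ultimately show ?thesis by (rule dfn_I)
qed

lemma dfn_and: assumes "is_structure S" "dfn S m P" "dfn S m Q" shows "dfn S m (\<lambda>x. P x \<and> Q x)"
proof -
  have "dfn S m (\<lambda>x. \<not> (\<not> P x \<or> \<not> Q x))"
    by (rule dfn_not[OF assms(1) dfn_or[OF assms(1) dfn_not[OF assms(1,2)] dfn_not[OF assms(1,3)]]])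
  then show ?thesis by simp
qed

lemma dfn_imp: assumes "is_structure S" "dfn S m P" "dfn S m Q" shows "dfn S m (\<lambda>x. P x \<longrightarrow> Q x)"
proof -
  have "dfn S m (\<lambda>x. \<not> P x \<or> Q x)"
    by (rule dfn_or[OF assms(1) dfn_not[OF assms(1,2)] assms(3)])
  then show ?thesis by simp
qed

lemma dfn_iff: assumes "is_structure S" "dfn S m P" "dfn S m Q" shows "dfn S m (\<lambda>x. P x \<longleftrightarrow> Q x)"
proof -
  have "dfn S m (\<lambda>x. (P x \<longrightarrow> Q x) \<and> (Q x \<longrightarrow> P x))"
    by (rule dfn_and[OF assms(1) dfn_imp[OF assms] dfn_imp[OF assms(1,3,2)]])
  then show ?thesis by (rule dfn_mono) blast
qed

lemma dfn_ex1: assumes "is_structure S" "dfn S (Suc m) P" shows "dfn S m (\<lambda>x. \<exists>a. P (x @ [a]))"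
proof -
  have "butlast ` {x. length x = Suc m \<and> P x} \<in> S m"
    using st_proj[OF assms(1)] assms(2) unfolding dfn_def by blast
  moreover have "butlast ` {x. length x = Suc m \<and> P x} = {x. length x = m \<and> (\<exists>a. P (x @ [a]))}"
  proof
    show "butlast ` {x. length x = Suc m \<and> P x} \<subseteq> {x. length x = m \<and> (\<exists>a. P (x @ [a]))}"
    proof
      fix y assume "y \<in> butlast ` {x. length x = Suc m \<and> P x}"
      then obtain x where x: "length x = Suc m" "P x" "y = butlast x" by auto
      then have "x \<noteq> []" by auto
      then have "y @ [last x] = x" using x(3) by simp
      then have "P (y @ [last x])" using x(2) by simp
      moreover have "length y = m" using x(1,3) by simp
      ultimately show "y \<in> {x. length x = m \<and> (\<exists>a. P (x @ [a]))}" by blast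
    qed
    show "{x. length x = m \<and> (\<exists>a. P (x @ [a]))} \<subseteq> butlast ` {x. length x = Suc m \<and> P x}"
    proof
      fix y assume "y \<in> {x. length x = m \<and> (\<exists>a. P (x @ [a]))}"
      then obtain a where "length y = m" "P (y @ [a])" by auto
      then have "y @ [a] \<in> {x. length x = Suc m \<and> P x}" by simp
      moreover have "y = butlast (y @ [a])" by simp
      ultimately show "y \<in> butlast ` {x. length x = Suc m \<and> P x}" by (rule rev_image_eqI)
    qed
  qed
  ultimately show ?thesis by (rule dfn_I)
qed

lemma dfn_exn: assumes "is_structure S" "dfn S (m + n) P"
  shows "dfn S m (\<lambda>x. \<exists>y. length y = n \<and> P (x @ y))"
  using assms(2)
proof (induction n arbitrary: P)
  case 0
  then have "dfn S m P" by simp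
  then show ?case by (rule dfn_mono) auto
next
  case (Suc n)
  have "dfn S (Suc (m + n)) P" using Suc.prems by simp
  then have "dfn S (m + n) (\<lambda>x. \<exists>a. P (x @ [a]))"
    by (rule dfn_ex1[OF assms(1)])
  then have "dfn S m (\<lambda>x. \<exists>y. length y = n \<and> (\<exists>a. P ((x @ y) @ [a])))"
    by (rule Suc.IH)
  then show ?case
  proof (rule dfn_mono)
    fix x :: "'a list"
    show "(\<exists>y. length y = n \<and> (\<exists>a. P ((x @ y) @ [a]))) = (\<exists>y. length y = Suc n \<and> P (x @ y))"
    proof
      assume "\<exists>y. length y = n \<and> (\<exists>a. P ((x @ y) @ [a]))"
      then obtain y a where "length y = n" "P ((x @ y) @ [a])" by auto
      then show "\<exists>y. length y = Suc n \<and> P (x @ y)"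
        by (intro exI[of _ "y @ [a]"]) auto
    next
      assume "\<exists>y. length y = Suc n \<and> P (x @ y)"
      then obtain y where y: "length y = Suc n" "P (x @ y)" by auto
      then have "y \<noteq> []" by auto
      then have yy: "butlast y @ [last y] = y" by simp
      have "P ((x @ butlast y) @ [last y])" using y(2) yy by (metis append_assoc)
      moreover have "length (butlast y) = n" using y(1) by simp
      ultimately show "\<exists>y. length y = n \<and> (\<exists>a. P ((x @ y) @ [a]))" by blast
    qed
  qed
qed

lemma dfn_alln: assumes "is_structure S" "dfn S (m + n) P"
  shows "dfn S m (\<lambda>x. \<forall>y. length y = n \<longrightarrow> P (x @ y))"
proof -
  have "dfn S m (\<lambda>x. \<not> (\<exists>y. length y = n \<and> \<not> P (x @ y)))"
    by (rule dfn_not[OF assms(1) dfn_exn[OF assms(1) dfn_not[OF assms]]])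
  then show ?thesis by (rule dfn_mono) blast
qed

lemma dfn_back: assumes "is_structure S" "dfn S m P" shows "dfn S (Suc m) (\<lambda>x. P (butlast x))"
proof -
  have "{x @ [a] | x a. x \<in> {x. length x = m \<and> P x}} \<in> S (Suc m)"
    using st_back[OF assms(1)] assms(2) unfolding dfn_def by blast
  moreover have "{x @ [a] | x a. x \<in> {x. length x = m \<and> P x}} = {x. length x = Suc m \<and> P (butlast x)}"
  proof safe
    fix x assume "length x = Suc m" "P (butlast x)"
    then show "\<exists>y a. x = y @ [a] \<and> y \<in> {x. length x = m \<and> P x}"
    proof -
      have "x \<noteq> []" using \<open>length x = Suc m\<close> by auto
      then have "x = butlast x @ [last x]" by simp
      moreover have "butlast x \<in> {x. length x = m \<and> P x}" using \<open>length x = Suc m\<close> \<open>P (butlast x)\<close> by simp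
      ultimately show ?thesis by blast
    qed
  qed auto
  ultimately show ?thesis by (rule dfn_I)
qed

lemma dfn_front: assumes "is_structure S" "dfn S m P" shows "dfn S (Suc m) (\<lambda>x. P (tl x))"
proof -
  have "{a # x | x a. x \<in> {x. length x = m \<and> P x}} \<in> S (Suc m)"
    using st_front[OF assms(1)] assms(2) unfolding dfn_def by blast
  moreover have "{a # x | x a. x \<in> {x. length x = m \<and> P x}} = {x. length x = Suc m \<and> P (tl x)}"
  proof safe
    fix x assume "length x = Suc m" "P (tl x)"
    then show "\<exists>y a. x = a # y \<and> y \<in> {x. length x = m \<and> P x}"
      by (cases x) auto
  qed auto
  ultimately show ?thesis by (rule dfn_I)
qed

lemma dfn_prefix: assumes "is_structure S" "dfn S m P" shows "dfn S (m + n) (\<lambda>x. P (take m x))"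
proof (induction n)
  case 0
  from assms(2) have "dfn S (m + 0) P" by simp
  then show ?case by (rule dfn_mono) simp
next
  case (Suc n)
  have "dfn S (m + Suc n) (\<lambda>x. P (take m (butlast x)))" using dfn_back[OF assms(1) Suc] by simp
  then show ?case by (rule dfn_mono) (simp add: butlast_conv_take)
qed

lemma dfn_suffix: assumes "is_structure S" "dfn S n P" shows "dfn S (m + n) (\<lambda>x. P (drop m x))"
proof (induction m)
  case 0
  from assms(2) have "dfn S (0 + n) P" by simp
  then show ?case by (rule dfn_mono) simp
next
  case (Suc m)
  have "dfn S (Suc m + n) (\<lambda>x. P (drop m (tl x)))" using dfn_front[OF assms(1) Suc] by simp
  then show ?case by (rule dfn_mono) (simp add: drop_Suc)
qed

lemma dfn_eq: assumes "is_structure S" "i < m" "j < m" shows "dfn S m (\<lambda>x. x ! i = x ! j)"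
  using st_diag[OF assms] unfolding dfn_def by blast

lemma dfn_true: assumes "is_structure S" shows "dfn S m (\<lambda>x. True)"
proof -
  have "dfn S m (\<lambda>x. False)" using st_empty[OF assms] unfolding dfn_def by simp
  then have "dfn S m (\<lambda>x. \<not> False)" by (rule dfn_not[OF assms])
  then show ?thesis by simp
qed

lemma dfn_all_lt: fixes N :: nat assumes "is_structure S" "\<And>i. i < N \<Longrightarrow> dfn S m (R i)"
  shows "dfn S m (\<lambda>x. \<forall>i<N. R i x)"
  using assms(2)
proof (induction N)
  case 0
  then show ?case using dfn_true[OF assms(1)] by simp
next
  case (Suc N)
  then have "dfn S m (\<lambda>x. (\<forall>i<N. R i x) \<and> R N x)" using dfn_and[OF assms(1)] by simp
  then show ?case by (rule dfn_mono) (auto simp: less_Suc_eq)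
qed

lemma dfn_pull: assumes "is_structure S" "dfn S a P" "length ids = a" "\<forall>i\<in>set ids. i < m"
  shows "dfn S m (\<lambda>y. P (map (nth y) ids))"
proof -
  have "dfn S (m + a) (\<lambda>z. P (drop m z))" using dfn_suffix[OF assms(1,2)] assms(3) by simp
  moreover have "dfn S (m + a) (\<lambda>z. \<forall>i<a. z ! (m + i) = z ! (ids ! i))"
    using assms by (intro dfn_all_lt dfn_eq) (auto simp: less_imp_le_nat trans_less_add1)
  ultimately have "dfn S (m + a) (\<lambda>z. P (drop m z) \<and> (\<forall>i<a. z ! (m + i) = z ! (ids ! i)))"
    by (rule dfn_and[OF assms(1)])
  then have "dfn S m (\<lambda>y. \<exists>z. length z = a \<and> P (drop m (y @ z)) \<and> (\<forall>i<a. (y @ z) ! (m + i) = (y @ z) ! (ids ! i)))"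
    by (rule dfn_exn[OF assms(1)])
  then show ?thesis
  proof (rule dfn_mono)
    fix y :: "'a list" assume ly: "length y = m"
    have "(\<exists>z. length z = a \<and> P (drop m (y @ z)) \<and> (\<forall>i<a. (y @ z) ! (m + i) = (y @ z) ! (ids ! i)))
        \<longleftrightarrow> (\<exists>z. length z = a \<and> P z \<and> (\<forall>i<a. z ! i = y ! (ids ! i)))"
      using ly assms(3,4) by (auto simp: nth_append)
    also have "\<dots> \<longleftrightarrow> P (map (nth y) ids)"
    proof
      assume "\<exists>z. length z = a \<and> P z \<and> (\<forall>i<a. z ! i = y ! (ids ! i))"
      then obtain z where z: "length z = a" "P z" "\<forall>i<a. z ! i = y ! (ids ! i)" by auto
      have "z = map (nth y) ids" using z assms(3) by (intro nth_equalityI) auto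
      then show "P (map (nth y) ids)" using z by simp
    next
      assume "P (map (nth y) ids)"
      then show "\<exists>z. length z = a \<and> P z \<and> (\<forall>i<a. z ! i = y ! (ids ! i))"
        using assms(3) by (intro exI[of _ "map (nth y) ids"]) auto
    qed
    finally show "(\<exists>z. length z = a \<and> P (drop m (y @ z)) \<and> (\<forall>i<a. (y @ z) ! (m + i) = (y @ z) ! (ids ! i)))
        \<longleftrightarrow> P (map (nth y) ids)" .
  qed
qed

lemma dfn_atom: assumes "is_structure S" "A \<in> S (length ids)" "\<forall>i\<in>set ids. i < m"
  shows "dfn S m (\<lambda>z. map (nth z) ids \<in> A)"
  using dfn_pull[OF assms(1) dfn_set[OF assms(1,2)] refl assms(3)] .

lemma map_nth_upt: "p + q \<le> length z \<Longrightarrow> map (nth z) [p..<p+q] = take q (drop p z)"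
  by (rule nth_equalityI) auto


lemma dfn_block1: assumes "is_structure S" "dfn S a P" "p + a \<le> m"
  shows "dfn S m (\<lambda>z. P (take a (drop p z)))"
proof -
  have "dfn S m (\<lambda>z. P (map (nth z) [p..<p+a]))"
    by (rule dfn_pull[OF assms(1,2)]) (use assms(3) in auto)
  then show ?thesis by (rule dfn_mono) (use assms(3) in \<open>simp add: map_nth_upt\<close>)
qed

lemma dfn_block2: assumes "is_structure S" "dfn S (a + b) P" "p + a \<le> m" "q + b \<le> m"
  shows "dfn S m (\<lambda>z. P (take a (drop p z) @ take b (drop q z)))"
proof -
  have "dfn S m (\<lambda>z. P (map (nth z) ([p..<p+a] @ [q..<q+b])))"
    by (rule dfn_pull[OF assms(1,2)]) (use assms(3,4) in auto)
  then show ?thesis by (rule dfn_mono) (use assms(3,4) in \<open>simp add: map_nth_upt\<close>)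
qed

lemma dfn_block3: assumes "is_structure S" "dfn S (a + b + c) P" "p + a \<le> m" "q + b \<le> m" "r + c \<le> m"
  shows "dfn S m (\<lambda>z. P (take a (drop p z) @ take b (drop q z) @ take c (drop r z)))"
proof -
  have "dfn S m (\<lambda>z. P (map (nth z) ([p..<p+a] @ [q..<q+b] @ [r..<r+c])))"
    by (rule dfn_pull[OF assms(1,2)]) (use assms(3,4,5) in auto)
  then show ?thesis by (rule dfn_mono) (use assms(3,4,5) in \<open>simp add: map_nth_upt\<close>)
qed

lemma dfn_block2': assumes "is_structure S" "dfn S (a + b) (\<lambda>w. Q (take a w) (drop a w))" "p + a \<le> m" "q + b \<le> m"
  shows "dfn S m (\<lambda>z. Q (take a (drop p z)) (take b (drop q z)))"
  using dfn_block2[OF assms] by (rule dfn_mono) (use assms(3,4) in simp)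

lemma dfn_block3': assumes "is_structure S" "dfn S (a + b + c) (\<lambda>w. Q (take a w) (take b (drop a w)) (drop (a + b) w))"
    "p + a \<le> m" "q + b \<le> m" "r + c \<le> m"
  shows "dfn S m (\<lambda>z. Q (take a (drop p z)) (take b (drop q z)) (take c (drop r z)))"
  using dfn_block3[OF assms] by (rule dfn_mono) (use assms(3,4,5) in simp)

lemma dfn_exn_blk: assumes "is_structure S" "dfn S (m + n) P"
    "\<And>x y. length x = m \<Longrightarrow> length y = n \<Longrightarrow> P (x @ y) = Q x y"
  shows "dfn S m (\<lambda>x. \<exists>y. length y = n \<and> Q x y)"
  using dfn_exn[OF assms(1,2)]
proof (rule dfn_mono)
  fix x :: "'a list" assume lx: "length x = m"
  show "(\<exists>y. length y = n \<and> P (x @ y)) = (\<exists>y. length y = n \<and> Q x y)"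
    using assms(3)[OF lx] by auto
qed

lemma dfn_alln_blk: assumes "is_structure S" "dfn S (m + n) P"
    "\<And>x y. length x = m \<Longrightarrow> length y = n \<Longrightarrow> P (x @ y) = Q x y"
  shows "dfn S m (\<lambda>x. \<forall>y. length y = n \<longrightarrow> Q x y)"
  using dfn_alln[OF assms(1,2)]
proof (rule dfn_mono)
  fix x :: "'a list" assume lx: "length x = m"
  show "(\<forall>y. length y = n \<longrightarrow> P (x @ y)) = (\<forall>y. length y = n \<longrightarrow> Q x y)"
    using assms(3)[OF lx] by auto
qed

locale dsetup =
  fixes S :: "nat \<Rightarrow> 'm list set set" and n :: nat and G :: "'m list set"
    and mul :: "'m list \<Rightarrow> 'm list \<Rightarrow> 'm list" and e :: "'m list" and \<tau> :: "'m list topology"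
    and k :: nat and T :: "'m list set" and B :: "'m list \<Rightarrow> 'm list set"
  assumes struct: "is_structure S"
  and grp: "group (grp G mul e)"
  and GS: "G \<in> S n"
  and GrS: "{x @ y @ mul x y | x y. x \<in> G \<and> y \<in> G} \<in> S (n + n + n)"
  and top: "topspace \<tau> = G"
  and TS: "T \<in> S k"
  and FS: "{t @ x | t x. t \<in> T \<and> x \<in> B t} \<in> S (k + n)"
  and Bopen: "\<forall>t\<in>T. openin \<tau> (B t)"
  and basis: "\<forall>U. openin \<tau> U \<longrightarrow> (\<forall>x\<in>U. \<exists>t\<in>T. x \<in> B t \<and> B t \<subseteq> U)"
  and cmul: "continuous_map (prod_topology \<tau> \<tau>) \<tau> (\<lambda>(x, y). mul x y)"
  and cinv: "continuous_map \<tau> \<tau> (\<lambda>x. inv\<^bsub>grp G mul e\<^esub> x)"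
  and cpt: "definably_compact S n \<tau>"

sublocale dsetup \<subseteq> Gp: group "grp G mul e" by (rule grp)

context dsetup
begin

definition iv where "iv x = inv\<^bsub>grp G mul e\<^esub> x"

lemma lenG: "x \<in> G \<Longrightarrow> length x = n"
  using st_len[OF struct GS] by blast

lemma lenT: "t \<in> T \<Longrightarrow> length t = k"
  using st_len[OF struct TS] by blast

lemma BG: "t \<in> T \<Longrightarrow> B t \<subseteq> G"
  using Bopen openin_subset top by metis

lemma Btn: "t \<in> T \<Longrightarrow> b \<in> B t \<Longrightarrow> length b = n"
  using BG lenG by blast

lemma mcl[simp]: "x \<in> G \<Longrightarrow> y \<in> G \<Longrightarrow> mul x y \<in> G"
  using Gp.m_closed[of x y] by simp
lemma ecl[simp]: "e \<in> G" using Gp.one_closed by simp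
lemma ivcl[simp]: "x \<in> G \<Longrightarrow> iv x \<in> G" using Gp.inv_closed[of x] by (simp add: iv_def)
lemma assoc[simp]: "x \<in> G \<Longrightarrow> y \<in> G \<Longrightarrow> z \<in> G \<Longrightarrow> mul (mul x y) z = mul x (mul y z)"
  using Gp.m_assoc[of x y z] by simp
lemma lone[simp]: "x \<in> G \<Longrightarrow> mul e x = x" using Gp.l_one[of x] by simp
lemma rone[simp]: "x \<in> G \<Longrightarrow> mul x e = x" using Gp.r_one[of x] by simp
lemma linv[simp]: "x \<in> G \<Longrightarrow> mul (iv x) x = e" using Gp.l_inv[of x] by (simp add: iv_def)
lemma rinv[simp]: "x \<in> G \<Longrightarrow> mul x (iv x) = e" using Gp.r_inv[of x] by (simp add: iv_def)
lemma linv2[simp]: "x \<in> G \<Longrightarrow> y \<in> G \<Longrightarrow> mul (iv x) (mul x y) = y"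
  by (metis assoc ivcl linv lone)
lemma rinv2[simp]: "x \<in> G \<Longrightarrow> y \<in> G \<Longrightarrow> mul x (mul (iv x) y) = y"
  by (metis assoc ivcl rinv lone)
lemma ivmul[simp]: "x \<in> G \<Longrightarrow> y \<in> G \<Longrightarrow> iv (mul x y) = mul (iv y) (iv x)"
  using Gp.inv_mult_group[of x y] by (simp add: iv_def)
lemma iviv[simp]: "x \<in> G \<Longrightarrow> iv (iv x) = x"
  using Gp.inv_inv[of x] by (simp add: iv_def)
lemma ive[simp]: "iv e = e"
  using Gp.inv_one by (simp add: iv_def)
lemma lcancel: "x \<in> G \<Longrightarrow> y \<in> G \<Longrightarrow> z \<in> G \<Longrightarrow> mul x y = mul x z \<longleftrightarrow> y = z"
  by (metis linv2)
lemma idem: "x \<in> G \<Longrightarrow> mul x x = x \<longleftrightarrow> x = e"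
  by (metis lcancel rone ecl)
lemma invuniq: "x \<in> G \<Longrightarrow> y \<in> G \<Longrightarrow> mul x y = e \<longleftrightarrow> y = iv x"
  by (metis lcancel rinv ivcl)

lemma lenmul[simp]: "x \<in> G \<Longrightarrow> y \<in> G \<Longrightarrow> length (mul x y) = n"
  using lenG mcl by blast

lemma Gr_mem: assumes "length x = n" "length y = n" "length w = n"
  shows "x @ y @ w \<in> {x @ y @ mul x y | x y. x \<in> G \<and> y \<in> G} \<longleftrightarrow> x \<in> G \<and> y \<in> G \<and> w = mul x y"
proof
  assume "x @ y @ w \<in> {x @ y @ mul x y | x y. x \<in> G \<and> y \<in> G}"
  then obtain x' y' where h: "x @ y @ w = x' @ y' @ mul x' y'" "x' \<in> G" "y' \<in> G" by blast
  then have "length x' = n" "length y' = n" using lenG by auto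
  then show "x \<in> G \<and> y \<in> G \<and> w = mul x y" using h assms by auto
qed auto

lemma F_mem: assumes "length t = k" "length x = n"
  shows "t @ x \<in> {t @ x | t x. t \<in> T \<and> x \<in> B t} \<longleftrightarrow> t \<in> T \<and> x \<in> B t"
proof
  assume "t @ x \<in> {t @ x | t x. t \<in> T \<and> x \<in> B t}"
  then obtain t' x' where h: "t @ x = t' @ x'" "t' \<in> T" "x' \<in> B t'" by blast
  then have "length t' = k" using lenT by auto
  then show "t \<in> T \<and> x \<in> B t" using h assms by auto
qed auto

lemma d_G: "dfn S n (\<lambda>x. x \<in> G)" by (rule dfn_set[OF struct GS])
lemma d_T: "dfn S k (\<lambda>x. x \<in> T)" by (rule dfn_set[OF struct TS])

lemma d_mul: "dfn S (n + n + n) (\<lambda>z. take n z \<in> G \<and> take n (drop n z) \<in> G \<and> drop (n + n) z = mul (take n z) (take n (drop n z)))"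
  using dfn_set[OF struct GrS]
proof (rule dfn_mono)
  fix z :: "'m list" assume lz: "length z = n + n + n"
  have "z = take n z @ take n (drop n z) @ drop (n + n) z"
    by (metis append_take_drop_id add.commute drop_drop take_add)
  then show "(z \<in> {x @ y @ mul x y | x y. x \<in> G \<and> y \<in> G}) = (take n z \<in> G \<and> take n (drop n z) \<in> G \<and> drop (n + n) z = mul (take n z) (take n (drop n z)))"
    using Gr_mem[of "take n z" "take n (drop n z)" "drop (n + n) z"] lz by simp
qed

lemma d_F: "dfn S (k + n) (\<lambda>z. take k z \<in> T \<and> drop k z \<in> B (take k z))"
  using dfn_set[OF struct FS]
proof (rule dfn_mono)
  fix z :: "'m list" assume lz: "length z = k + n"
  have "z = take k z @ drop k z" by simp
  then show "(z \<in> {t @ x | t x. t \<in> T \<and> x \<in> B t}) = (take k z \<in> T \<and> drop k z \<in> B (take k z))"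
    using F_mem[of "take k z" "drop k z"] lz by simp
qed

lemma d_e: "dfn S n (\<lambda>z. z = e)"
proof -
  have "dfn S n (\<lambda>z. (\<lambda>z. take n z \<in> G \<and> take n (drop n z) \<in> G \<and> drop (n + n) z = mul (take n z) (take n (drop n z)))
          (take n (drop 0 z) @ take n (drop 0 z) @ take n (drop 0 z)))"
    by (rule dfn_block3[OF struct d_mul]) auto
  then show ?thesis
  proof (rule dfn_mono)
    fix z :: "'m list" assume lz: "length z = n"
    show "(\<lambda>z. take n z \<in> G \<and> take n (drop n z) \<in> G \<and> drop (n + n) z = mul (take n z) (take n (drop n z)))
          (take n (drop 0 z) @ take n (drop 0 z) @ take n (drop 0 z)) = (z = e)"
      using lz idem[of z] lenG[of e] by auto
  qed
qed


lemma d_inv: "dfn S (n + n) (\<lambda>z. take n z \<in> G \<and> drop n z = iv (take n z))"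
proof -
  have "dfn S (n + n + n) (\<lambda>z. take n (drop (n + n) z) = e)"
    by (rule dfn_block1[OF struct d_e]) auto
  then have "dfn S (n + n + n) (\<lambda>z. (take n z \<in> G \<and> take n (drop n z) \<in> G \<and> drop (n + n) z = mul (take n z) (take n (drop n z)))
      \<and> take n (drop (n + n) z) = e)"
    by (rule dfn_and[OF struct d_mul])
  then have "dfn S (n + n) (\<lambda>z. \<exists>y. length y = n \<and> ((take n (z @ y) \<in> G \<and> take n (drop n (z @ y)) \<in> G \<and> drop (n + n) (z @ y) = mul (take n (z @ y)) (take n (drop n (z @ y))))
      \<and> take n (drop (n + n) (z @ y)) = e))"
    by (rule dfn_exn[OF struct])
  then show ?thesis
  proof (rule dfn_mono)
    fix z :: "'m list" assume lz: "length z = n + n"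
    show "(\<exists>y. length y = n \<and> ((take n (z @ y) \<in> G \<and> take n (drop n (z @ y)) \<in> G \<and> drop (n + n) (z @ y) = mul (take n (z @ y)) (take n (drop n (z @ y))))
      \<and> take n (drop (n + n) (z @ y)) = e)) = (take n z \<in> G \<and> drop n z = iv (take n z))"
      using lz invuniq[of "take n z" "drop n z"] lenG[of e] lenG[of "iv (take n z)"] by auto
  qed
qed

definition cj where "cj g x = mul (mul (iv g) x) g"

lemma cjcl[simp]: "g \<in> G \<Longrightarrow> x \<in> G \<Longrightarrow> cj g x \<in> G" by (simp add: cj_def)

lemma d_conj: "dfn S (n + n + n) (\<lambda>z. take n z \<in> G \<and> take n (drop n z) \<in> G \<and> drop (n + n) z = cj (take n z) (take n (drop n z)))"
proof -
  have a: "dfn S (n + n + n + (n + n)) (\<lambda>z. take n (drop 0 z) \<in> G \<and> take n (drop (n+n+n) z) = iv (take n (drop 0 z)))"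
    by (rule dfn_block2'[where Q = "\<lambda>x y. x \<in> G \<and> y = iv x", OF struct d_inv]) auto
  have b: "dfn S (n + n + n + (n + n)) (\<lambda>z. take n (drop (n+n+n) z) \<in> G \<and> take n (drop n z) \<in> G \<and> take n (drop (n+n+n+n) z) = mul (take n (drop (n+n+n) z)) (take n (drop n z)))"
    by (rule dfn_block3'[where Q = "\<lambda>x y w. x \<in> G \<and> y \<in> G \<and> w = mul x y", OF struct d_mul]) auto
  have c: "dfn S (n + n + n + (n + n)) (\<lambda>z. take n (drop (n+n+n+n) z) \<in> G \<and> take n (drop 0 z) \<in> G \<and> take n (drop (n+n) z) = mul (take n (drop (n+n+n+n) z)) (take n (drop 0 z)))"
    by (rule dfn_block3'[where Q = "\<lambda>x y w. x \<in> G \<and> y \<in> G \<and> w = mul x y", OF struct d_mul]) auto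
  have "dfn S (n + n + n + (n + n)) (\<lambda>z. (take n (drop 0 z) \<in> G \<and> take n (drop (n+n+n) z) = iv (take n (drop 0 z)))
     \<and> (take n (drop (n+n+n) z) \<in> G \<and> take n (drop n z) \<in> G \<and> take n (drop (n+n+n+n) z) = mul (take n (drop (n+n+n) z)) (take n (drop n z)))
     \<and> (take n (drop (n+n+n+n) z) \<in> G \<and> take n (drop 0 z) \<in> G \<and> take n (drop (n+n) z) = mul (take n (drop (n+n+n+n) z)) (take n (drop 0 z))))"
    using dfn_and[OF struct a dfn_and[OF struct b c]] .
  then have "dfn S (n + n + n) (\<lambda>z. \<exists>y. length y = n + n \<and> ((take n (drop 0 (z@y)) \<in> G \<and> take n (drop (n+n+n) (z@y)) = iv (take n (drop 0 (z@y))))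
     \<and> (take n (drop (n+n+n) (z@y)) \<in> G \<and> take n (drop n (z@y)) \<in> G \<and> take n (drop (n+n+n+n) (z@y)) = mul (take n (drop (n+n+n) (z@y))) (take n (drop n (z@y))))
     \<and> (take n (drop (n+n+n+n) (z@y)) \<in> G \<and> take n (drop 0 (z@y)) \<in> G \<and> take n (drop (n+n) (z@y)) = mul (take n (drop (n+n+n+n) (z@y))) (take n (drop 0 (z@y))))))"
    by (rule dfn_exn[OF struct])
  then show ?thesis
  proof (rule dfn_mono)
    fix z :: "'m list" assume lz: "length z = n + n + n"
    define g where "g = take n z"
    define x where "x = take n (drop n z)"
    define c where "c = drop (n + n) z"
    have lc: "length c = n" using lz c_def by simp
    have tc: "take n (drop (n+n) z) = c" using lz c_def by simp
    show "(\<exists>y. length y = n + n \<and> ((take n (drop 0 (z@y)) \<in> G \<and> take n (drop (n+n+n) (z@y)) = iv (take n (drop 0 (z@y))))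
     \<and> (take n (drop (n+n+n) (z@y)) \<in> G \<and> take n (drop n (z@y)) \<in> G \<and> take n (drop (n+n+n+n) (z@y)) = mul (take n (drop (n+n+n) (z@y))) (take n (drop n (z@y))))
     \<and> (take n (drop (n+n+n+n) (z@y)) \<in> G \<and> take n (drop 0 (z@y)) \<in> G \<and> take n (drop (n+n) (z@y)) = mul (take n (drop (n+n+n+n) (z@y))) (take n (drop 0 (z@y))))))
     = (take n z \<in> G \<and> take n (drop n z) \<in> G \<and> drop (n + n) z = cj (take n z) (take n (drop n z)))"
    proof
      assume "\<exists>y. length y = n + n \<and> ((take n (drop 0 (z@y)) \<in> G \<and> take n (drop (n+n+n) (z@y)) = iv (take n (drop 0 (z@y))))
     \<and> (take n (drop (n+n+n) (z@y)) \<in> G \<and> take n (drop n (z@y)) \<in> G \<and> take n (drop (n+n+n+n) (z@y)) = mul (take n (drop (n+n+n) (z@y))) (take n (drop n (z@y))))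
     \<and> (take n (drop (n+n+n+n) (z@y)) \<in> G \<and> take n (drop 0 (z@y)) \<in> G \<and> take n (drop (n+n) (z@y)) = mul (take n (drop (n+n+n+n) (z@y))) (take n (drop 0 (z@y)))))"
      then obtain y where "length y = n + n" "take n z \<in> G \<and> take n y = iv (take n z)"
        "take n y \<in> G \<and> take n (drop n z) \<in> G \<and> drop n y = mul (take n y) (take n (drop n z))"
        "drop n y \<in> G \<and> take n z \<in> G \<and> take n (drop (n+n) z) = mul (drop n y) (take n z)"
        using lz by auto
      then show "take n z \<in> G \<and> take n (drop n z) \<in> G \<and> drop (n + n) z = cj (take n z) (take n (drop n z))"
        using tc c_def by (simp add: cj_def)
    next
      assume h: "take n z \<in> G \<and> take n (drop n z) \<in> G \<and> drop (n + n) z = cj (take n z) (take n (drop n z))"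
      define v where "v = iv g"
      define w where "w = mul v x"
      have lv: "length v = n" "length w = n" using h lenG v_def w_def g_def x_def by auto
      show "\<exists>y. length y = n + n \<and> ((take n (drop 0 (z@y)) \<in> G \<and> take n (drop (n+n+n) (z@y)) = iv (take n (drop 0 (z@y))))
     \<and> (take n (drop (n+n+n) (z@y)) \<in> G \<and> take n (drop n (z@y)) \<in> G \<and> take n (drop (n+n+n+n) (z@y)) = mul (take n (drop (n+n+n) (z@y))) (take n (drop n (z@y))))
     \<and> (take n (drop (n+n+n+n) (z@y)) \<in> G \<and> take n (drop 0 (z@y)) \<in> G \<and> take n (drop (n+n) (z@y)) = mul (take n (drop (n+n+n+n) (z@y))) (take n (drop 0 (z@y)))))"
      proof (rule exI[of _ "v @ w"])
        have lg: "length g = n" "length x = n" using lz g_def x_def by auto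
        have zz: "z = g @ x @ c" unfolding g_def x_def c_def
          by (metis append_take_drop_id add.commute drop_drop take_add)
        have gG: "g \<in> G" "x \<in> G" using h g_def x_def by auto
        have cc: "c = mul w g" using h unfolding c_def[symmetric] g_def[symmetric] x_def[symmetric] by (simp add: cj_def w_def v_def)
        show "length (v @ w) = n + n \<and> ((take n (drop 0 (z@(v @ w))) \<in> G \<and> take n (drop (n+n+n) (z@(v @ w))) = iv (take n (drop 0 (z@(v @ w)))))
     \<and> (take n (drop (n+n+n) (z@(v @ w))) \<in> G \<and> take n (drop n (z@(v @ w))) \<in> G \<and> take n (drop (n+n+n+n) (z@(v @ w))) = mul (take n (drop (n+n+n) (z@(v @ w)))) (take n (drop n (z@(v @ w)))))
     \<and> (take n (drop (n+n+n+n) (z@(v @ w))) \<in> G \<and> take n (drop 0 (z@(v @ w))) \<in> G \<and> take n (drop (n+n) (z@(v @ w))) = mul (take n (drop (n+n+n+n) (z@(v @ w)))) (take n (drop 0 (z@(v @ w))))))"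
          unfolding zz using lg lc lv gG cc by (simp add: v_def w_def)
      qed
    qed
  qed
qed


lemma clos_basis: assumes "Y \<subseteq> G"
  shows "x \<in> \<tau> closure_of Y \<longleftrightarrow> x \<in> G \<and> (\<forall>s\<in>T. x \<in> B s \<longrightarrow> (\<exists>y\<in>B s. y \<in> Y))"
proof -
  have "x \<in> \<tau> closure_of Y \<longleftrightarrow> x \<in> G \<and> (\<forall>U. x \<in> U \<and> openin \<tau> U \<longrightarrow> (\<exists>y. y \<in> Y \<and> y \<in> U))"
    unfolding in_closure_of top ..
  also have "\<dots> \<longleftrightarrow> x \<in> G \<and> (\<forall>s\<in>T. x \<in> B s \<longrightarrow> (\<exists>y\<in>B s. y \<in> Y))"
  proof (intro conj_cong refl iffI ballI impI allI)
    fix s assume h: "\<forall>U. x \<in> U \<and> openin \<tau> U \<longrightarrow> (\<exists>y. y \<in> Y \<and> y \<in> U)" and s: "s \<in> T" "x \<in> B s"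
    have "openin \<tau> (B s)" using Bopen s(1) by (rule bspec)
    then have "\<exists>y. y \<in> Y \<and> y \<in> B s" using h s(2) by (elim allE[of _ "B s"]) (erule impE, rule conjI)
    then show "\<exists>y\<in>B s. y \<in> Y" by (elim exE conjE) (rule bexI)
  next
    fix U assume h: "\<forall>s\<in>T. x \<in> B s \<longrightarrow> (\<exists>y\<in>B s. y \<in> Y)" and U: "x \<in> U \<and> openin \<tau> U"
    have "\<forall>x\<in>U. \<exists>t\<in>T. x \<in> B t \<and> B t \<subseteq> U" using basis U by (elim allE[of _ U]) (erule impE, erule conjunct2)
    then obtain s where s: "s \<in> T" "x \<in> B s" "B s \<subseteq> U" using U by (elim conjE ballE) auto
    then obtain y where "y \<in> B s" "y \<in> Y" using h by (elim ballE[of _ _ s] impE) auto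
    then show "\<exists>y. y \<in> Y \<and> y \<in> U" using s(3) by auto
  qed
  finally show ?thesis .
qed

lemma int_basis: "x \<in> \<tau> interior_of Y \<longleftrightarrow> (\<exists>s\<in>T. x \<in> B s \<and> B s \<subseteq> Y)"
proof
  assume "x \<in> \<tau> interior_of Y"
  then obtain U where U: "openin \<tau> U" "x \<in> U" "U \<subseteq> Y" unfolding interior_of_def by auto
  have "\<forall>x\<in>U. \<exists>t\<in>T. x \<in> B t \<and> B t \<subseteq> U" using basis U(1) by (elim allE[of _ U]) (erule impE)
  then obtain s where "s \<in> T" "x \<in> B s" "B s \<subseteq> U" using U(2) by auto
  then show "\<exists>s\<in>T. x \<in> B s \<and> B s \<subseteq> Y" using U(3) by auto
next
  assume "\<exists>s\<in>T. x \<in> B s \<and> B s \<subseteq> Y"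
  then obtain s where "s \<in> T" "x \<in> B s" "B s \<subseteq> Y" by auto
  moreover have "openin \<tau> (B s)" using Bopen \<open>s \<in> T\<close> by auto
  ultimately show "x \<in> \<tau> interior_of Y" unfolding interior_of_def by auto
qed

lemma basisE: assumes "openin \<tau> U" "x \<in> U"
  obtains t where "t \<in> T" "x \<in> B t" "B t \<subseteq> U"
proof -
  have "\<forall>x\<in>U. \<exists>t\<in>T. x \<in> B t \<and> B t \<subseteq> U" using basis assms(1) by (elim allE[of _ U]) (erule impE)
  then have "\<exists>t\<in>T. x \<in> B t \<and> B t \<subseteq> U" using assms(2) by (rule bspec)
  then show ?thesis using that by (elim bexE conjE)
qed

lemma cptD: assumes "definable_family S k' n T'' C" "\<forall>t\<in>T''. closedin \<tau> (C t) \<and> C t \<noteq> {}"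
    "\<forall>t1\<in>T''. \<forall>t2\<in>T''. \<exists>t3\<in>T''. C t3 \<subseteq> C t1 \<inter> C t2"
  shows "(\<Inter>t\<in>T''. C t) \<noteq> {}"
proof -
  have "\<forall>k T C. definable_family S k n T C \<and> (\<forall>t\<in>T. closedin \<tau> (C t) \<and> C t \<noteq> {}) \<and>
       (\<forall>t1\<in>T. \<forall>t2\<in>T. \<exists>t3\<in>T. C t3 \<subseteq> C t1 \<inter> C t2) \<longrightarrow> (\<Inter>t\<in>T. C t) \<noteq> {}"
    using cpt unfolding definably_compact_def .
  then show ?thesis using assms by (intro mp[OF spec[OF spec[OF spec[OF \<open>\<forall>k T C. _\<close>, of k'], of T''], of C]] conjI)
qed

lemma tube:
  assumes Om: "openin (prod_topology \<tau> \<tau>) \<Omega>" and sub: "G \<times> {e} \<subseteq> \<Omega>"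
    and dO: "dfn S (n + n) (\<lambda>z. (take n z, drop n z) \<in> \<Omega>)"
  shows "\<exists>V. openin \<tau> V \<and> e \<in> V \<and> G \<times> V \<subseteq> \<Omega>"
proof (rule ccontr)
  assume neg: "\<not> ?thesis"
  define T' where "T' = {t\<in>T. e \<in> B t}"
  define D where "D t = {g\<in>G. \<exists>b\<in>B t. (g, b) \<notin> \<Omega>}" for t
  define C where "C t = \<tau> closure_of D t" for t
  have DG: "D t \<subseteq> G" for t unfolding D_def by blast
  have Cne: "\<forall>t\<in>T'. C t \<noteq> {}"
  proof
    fix t assume t: "t \<in> T'"
    show "C t \<noteq> {}"
    proof
      assume "C t = {}"
      then have "D t = {}" using closure_of_subset[of "D t" \<tau>] DG top unfolding C_def by auto
      then have "G \<times> B t \<subseteq> \<Omega>" unfolding D_def by auto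
      then show False using neg t Bopen unfolding T'_def by blast
    qed
  qed
  have dT'0: "dfn S k (\<lambda>t. t \<in> T \<and> e \<in> B t)"
  proof -
    have a: "dfn S (k + n) (\<lambda>z. take k (drop 0 z) \<in> T \<and> take n (drop k z) \<in> B (take k (drop 0 z)))"
      by (rule dfn_block2'[where Q = "\<lambda>t x. t \<in> T \<and> x \<in> B t", OF struct d_F]) auto
    have b: "dfn S (k + n) (\<lambda>z. take n (drop k z) = e)"
      by (rule dfn_block1[OF struct d_e]) auto
    have "dfn S k (\<lambda>t. \<exists>y. length y = n \<and> (t \<in> T \<and> y \<in> B t \<and> y = e))"
      by (rule dfn_exn_blk[OF struct dfn_and[OF struct a b]]) simp
    then show ?thesis
      by (rule dfn_mono) (use lenG[of e] in auto)
  qed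
  have dT': "T' \<in> S k"
  proof -
    have "{t. length t = k \<and> t \<in> T \<and> e \<in> B t} = T'" unfolding T'_def using lenT by auto
    then show ?thesis using set_dfn[OF dT'0] by simp
  qed
  have L: "take k z \<in> T' \<and> drop k z \<in> C (take k z) \<longleftrightarrow> take k z \<in> T' \<and> drop k z \<in> G \<and>
           (\<forall>s. length s = k \<longrightarrow> s \<in> T \<and> drop k z \<in> B s \<longrightarrow> (\<exists>y. length y = n \<and> (s \<in> T \<and> y \<in> B s) \<and> (\<exists>b. length b = n \<and> take k z \<in> T \<and> b \<in> B (take k z) \<and> (y, b) \<notin> \<Omega>)))" for z
  proof -
    have "drop k z \<in> C (take k z) \<longleftrightarrow> drop k z \<in> G \<and> (\<forall>s\<in>T. drop k z \<in> B s \<longrightarrow> (\<exists>y\<in>B s. y \<in> D (take k z)))"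
      unfolding C_def by (rule clos_basis[OF DG])
    moreover have "(\<forall>s\<in>T. drop k z \<in> B s \<longrightarrow> (\<exists>y\<in>B s. y \<in> D (take k z))) \<longleftrightarrow>
          (\<forall>s. length s = k \<longrightarrow> s \<in> T \<and> drop k z \<in> B s \<longrightarrow> (\<exists>y. length y = n \<and> (s \<in> T \<and> y \<in> B s) \<and> (\<exists>b. length b = n \<and> take k z \<in> T \<and> b \<in> B (take k z) \<and> (y, b) \<notin> \<Omega>)))"
      if tT: "take k z \<in> T"
    proof
      assume h: "\<forall>s\<in>T. drop k z \<in> B s \<longrightarrow> (\<exists>y\<in>B s. y \<in> D (take k z))"
      show "\<forall>s. length s = k \<longrightarrow> s \<in> T \<and> drop k z \<in> B s \<longrightarrow> (\<exists>y. length y = n \<and> (s \<in> T \<and> y \<in> B s) \<and> (\<exists>b. length b = n \<and> take k z \<in> T \<and> b \<in> B (take k z) \<and> (y, b) \<notin> \<Omega>))"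
      proof (intro allI impI)
        fix s assume s: "length s = k" "s \<in> T \<and> drop k z \<in> B s"
        then obtain y where y: "y \<in> B s" "y \<in> D (take k z)" using h by blast
        then obtain b where b: "b \<in> B (take k z)" "(y, b) \<notin> \<Omega>" unfolding D_def by blast
        show "\<exists>y. length y = n \<and> (s \<in> T \<and> y \<in> B s) \<and> (\<exists>b. length b = n \<and> take k z \<in> T \<and> b \<in> B (take k z) \<and> (y, b) \<notin> \<Omega>)"
          using y b s tT Btn by blast
      qed
    next
      assume h: "\<forall>s. length s = k \<longrightarrow> s \<in> T \<and> drop k z \<in> B s \<longrightarrow> (\<exists>y. length y = n \<and> (s \<in> T \<and> y \<in> B s) \<and> (\<exists>b. length b = n \<and> take k z \<in> T \<and> b \<in> B (take k z) \<and> (y, b) \<notin> \<Omega>))"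
      show "\<forall>s\<in>T. drop k z \<in> B s \<longrightarrow> (\<exists>y\<in>B s. y \<in> D (take k z))"
      proof (intro ballI impI)
        fix s assume s: "s \<in> T" "drop k z \<in> B s"
        then have "length s = k" using lenT by blast
        then obtain y b where yb: "y \<in> B s" "b \<in> B (take k z)" "(y, b) \<notin> \<Omega>" using h s by blast
        then have "y \<in> G" using BG s by blast
        then show "\<exists>y\<in>B s. y \<in> D (take k z)" using yb unfolding D_def by blast
      qed
    qed
    moreover have "take k z \<in> T' \<Longrightarrow> take k z \<in> T" unfolding T'_def by blast
    ultimately show ?thesis by blast
  qed
  have dC0: "dfn S (k + n) (\<lambda>z. take k z \<in> T' \<and> drop k z \<in> C (take k z))"
  proof -
    let ?L5 = "k + n + k + n + n"
    have a1: "dfn S ?L5 (\<lambda>z. take k (drop 0 z) \<in> T \<and> take n (drop (k + n + k + n) z) \<in> B (take k (drop 0 z)))"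
      by (rule dfn_block2'[where Q = "\<lambda>t x. t \<in> T \<and> x \<in> B t", OF struct d_F]) auto
    have a2: "dfn S ?L5 (\<lambda>z. (take n (drop (k + n + k) z), take n (drop (k + n + k + n) z)) \<in> \<Omega>)"
      by (rule dfn_block2'[where Q = "\<lambda>y b. (y, b) \<in> \<Omega>", OF struct dO]) auto
    have b4: "dfn S (k + n + k + n) (\<lambda>z. \<exists>b. length b = n \<and> (take k z \<in> T \<and> b \<in> B (take k z) \<and> (take n (drop (k + n + k) z), b) \<notin> \<Omega>))"
      by (rule dfn_exn_blk[OF struct dfn_and[OF struct a1 dfn_not[OF struct a2]]]) simp
    have a3: "dfn S (k + n + k + n) (\<lambda>z. take k (drop (k + n) z) \<in> T \<and> take n (drop (k + n + k) z) \<in> B (take k (drop (k + n) z)))"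
      by (rule dfn_block2'[where Q = "\<lambda>t x. t \<in> T \<and> x \<in> B t", OF struct d_F]) auto
    have b3: "dfn S (k + n + k) (\<lambda>z. \<exists>y. length y = n \<and> ((take k (drop (k + n) z) \<in> T \<and> y \<in> B (take k (drop (k + n) z))) \<and> (\<exists>b. length b = n \<and> (take k z \<in> T \<and> b \<in> B (take k z) \<and> (y, b) \<notin> \<Omega>))))"
      by (rule dfn_exn_blk[OF struct dfn_and[OF struct a3 b4]]) simp
    have a4: "dfn S (k + n + k) (\<lambda>z. take k (drop (k + n) z) \<in> T \<and> take n (drop k z) \<in> B (take k (drop (k + n) z)))"
      by (rule dfn_block2'[where Q = "\<lambda>t x. t \<in> T \<and> x \<in> B t", OF struct d_F]) auto
    have b2: "dfn S (k + n) (\<lambda>z. \<forall>s. length s = k \<longrightarrow> ((s \<in> T \<and> take n (drop k z) \<in> B s) \<longrightarrow> (\<exists>y. length y = n \<and> ((s \<in> T \<and> y \<in> B s) \<and> (\<exists>b. length b = n \<and> (take k z \<in> T \<and> b \<in> B (take k z) \<and> (y, b) \<notin> \<Omega>))))))"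
      by (rule dfn_alln_blk[OF struct dfn_imp[OF struct a4 b3]]) simp
    have a5: "dfn S (k + n) (\<lambda>z. take k (drop 0 z) \<in> T')"
      by (rule dfn_block1[OF struct dfn_set[OF struct dT']]) auto
    have a6: "dfn S (k + n) (\<lambda>z. take n (drop k z) \<in> G)"
      by (rule dfn_block1[OF struct d_G]) auto
    have "dfn S (k + n) (\<lambda>z. take k (drop 0 z) \<in> T' \<and> take n (drop k z) \<in> G \<and> (\<forall>s. length s = k \<longrightarrow> ((s \<in> T \<and> take n (drop k z) \<in> B s) \<longrightarrow> (\<exists>y. length y = n \<and> ((s \<in> T \<and> y \<in> B s) \<and> (\<exists>b. length b = n \<and> (take k z \<in> T \<and> b \<in> B (take k z) \<and> (y, b) \<notin> \<Omega>)))))))"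
      by (rule dfn_and[OF struct a5 dfn_and[OF struct a6 b2]])
    then show ?thesis
    proof (rule dfn_mono)
      fix z :: "'m list" assume lz: "length z = k + n"
      have tz: "take n (drop k z) = drop k z" using lz by simp
      show "(take k (drop 0 z) \<in> T' \<and> take n (drop k z) \<in> G \<and> (\<forall>s. length s = k \<longrightarrow> ((s \<in> T \<and> take n (drop k z) \<in> B s) \<longrightarrow> (\<exists>y. length y = n \<and> ((s \<in> T \<and> y \<in> B s) \<and> (\<exists>b. length b = n \<and> (take k z \<in> T \<and> b \<in> B (take k z) \<and> (y, b) \<notin> \<Omega>)))))))
          = (take k z \<in> T' \<and> drop k z \<in> C (take k z))"
        unfolding L tz by simp
    qed
  qed
  have CG: "C t \<subseteq> G" for t unfolding C_def using closure_of_subset_topspace top by metis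
  have dC: "{t @ x | t x. t \<in> T' \<and> x \<in> C t} \<in> S (k + n)"
  proof -
    have "{t @ x | t x. t \<in> T' \<and> x \<in> C t} = {z. length z = k + n \<and> take k z \<in> T' \<and> drop k z \<in> C (take k z)}"
    proof safe
      fix z assume "length z = k + n" "take k z \<in> T'" "drop k z \<in> C (take k z)"
      then show "\<exists>t x. z = t @ x \<and> t \<in> T' \<and> x \<in> C t" by (metis append_take_drop_id)
    next
      fix t x assume "t \<in> T'" "x \<in> C t"
      then have "length t = k" "length x = n" using lenT lenG CG unfolding T'_def by auto
      then show "length (t @ x) = k + n" "take k (t @ x) \<in> T'" "drop k (t @ x) \<in> C (take k (t @ x))"
        using \<open>t \<in> T'\<close> \<open>x \<in> C t\<close> by auto
    qed
    then show ?thesis using set_dfn[OF dC0] by simp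
  qed
  have filt: "\<forall>t1\<in>T'. \<forall>t2\<in>T'. \<exists>t3\<in>T'. C t3 \<subseteq> C t1 \<inter> C t2"
  proof (intro ballI)
    fix t1 t2 assume t: "t1 \<in> T'" "t2 \<in> T'"
    then have "openin \<tau> (B t1 \<inter> B t2)" "e \<in> B t1 \<inter> B t2" using Bopen unfolding T'_def by auto
    then obtain t3 where t3: "t3 \<in> T" "e \<in> B t3" "B t3 \<subseteq> B t1 \<inter> B t2" by (rule basisE)
    then have "D t3 \<subseteq> D t1" "D t3 \<subseteq> D t2" unfolding D_def by auto
    then have "C t3 \<subseteq> C t1 \<inter> C t2" unfolding C_def using closure_of_mono by blast
    then show "\<exists>t3\<in>T'. C t3 \<subseteq> C t1 \<inter> C t2" using t3 unfolding T'_def by blast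
  qed
  have "definable_family S k n T' C" unfolding definable_family_def using dT' dC by (rule conjI)
  moreover have "\<forall>t\<in>T'. closedin \<tau> (C t) \<and> C t \<noteq> {}" using Cne unfolding C_def by simp
  ultimately have "(\<Inter>t\<in>T'. C t) \<noteq> {}" using filt by (rule cptD)
  moreover have "T' \<noteq> {}"
  proof -
    have "openin \<tau> G" using openin_topspace top by metis
    then obtain t where "t \<in> T" "e \<in> B t" using ecl by (rule basisE)
    then show ?thesis unfolding T'_def by blast
  qed
  ultimately obtain g0 where g0: "\<forall>t\<in>T'. g0 \<in> C t" by blast
  obtain t0 where "t0 \<in> T'" using \<open>T' \<noteq> {}\<close> by blast
  then have g0G: "g0 \<in> G" using CG g0 by blast
  then have "(g0, e) \<in> \<Omega>" using sub by blast
  moreover have "\<forall>x y. (x, y) \<in> \<Omega> \<longrightarrow> (\<exists>U V. openin \<tau> U \<and> openin \<tau> V \<and> x \<in> U \<and> y \<in> V \<and> U \<times> V \<subseteq> \<Omega>)"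
    using Om by (simp only: openin_prod_topology_alt)
  ultimately have "\<exists>U V. openin \<tau> U \<and> openin \<tau> V \<and> g0 \<in> U \<and> e \<in> V \<and> U \<times> V \<subseteq> \<Omega>" by blast
  then obtain U V where UV: "openin \<tau> U" "openin \<tau> V" "g0 \<in> U" "e \<in> V" "U \<times> V \<subseteq> \<Omega>" by blast
  obtain t where t: "t \<in> T" "e \<in> B t" "B t \<subseteq> V" using basisE[OF UV(2,4)] by blast
  then have "t \<in> T'" unfolding T'_def by blast
  then have "g0 \<in> \<tau> closure_of D t" using g0 unfolding C_def by blast
  then have "\<forall>W. g0 \<in> W \<and> openin \<tau> W \<longrightarrow> (\<exists>y. y \<in> D t \<and> y \<in> W)" unfolding in_closure_of by (rule conjunct2)
  then have "\<exists>y. y \<in> D t \<and> y \<in> U" using UV(1,3) by blast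
  then obtain y where y: "y \<in> D t" "y \<in> U" by blast
  then obtain b where b: "b \<in> B t" "(y, b) \<notin> \<Omega>" unfolding D_def by blast
  have "(y, b) \<in> U \<times> V" using y(2) b(1) t(3) by blast
  then show False using UV(5) b(2) by blast
qed


lemma cm_mul: "continuous_map X \<tau> f \<Longrightarrow> continuous_map X \<tau> g \<Longrightarrow> continuous_map X \<tau> (\<lambda>x. mul (f x) (g x))"
proof -
  assume "continuous_map X \<tau> f" "continuous_map X \<tau> g"
  then have "continuous_map X (prod_topology \<tau> \<tau>) (\<lambda>x. (f x, g x))" by (rule continuous_map_pairedI)
  then have "continuous_map X \<tau> ((\<lambda>(x, y). mul x y) \<circ> (\<lambda>x. (f x, g x)))" using cmul by (rule continuous_map_compose)
  then show ?thesis by (simp add: o_def)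
qed

lemma cm_iv: "continuous_map X \<tau> f \<Longrightarrow> continuous_map X \<tau> (\<lambda>x. iv (f x))"
proof -
  assume "continuous_map X \<tau> f"
  then have "continuous_map X \<tau> ((\<lambda>x. inv\<^bsub>grp G mul e\<^esub> x) \<circ> f)" using cinv by (rule continuous_map_compose)
  then show ?thesis by (simp add: o_def iv_def)
qed

lemma main:
  assumes AS: "A \<in> S n" and AG: "A \<subseteq> G" and Ao: "openin \<tau> A" and Ac: "closedin \<tau> A"
    and Ane: "A \<noteq> {}" and AnG: "A \<noteq> G"
    and simple: "definably_simple S n G mul e"
  shows "\<tau> = discrete_topology G"
proof -
  let ?P = "prod_topology \<tau> \<tau>"
  have tP: "topspace ?P = G \<times> G" by (simp add: top)
  define \<Omega>1 where "\<Omega>1 = {p \<in> G \<times> G. (mul (snd p) (fst p) \<in> A) = (fst p \<in> A)}"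
  have cf: "continuous_map ?P \<tau> (\<lambda>p. mul (snd p) (fst p))"
    by (intro cm_mul continuous_map_fst continuous_map_snd)
  define P1 where "P1 = {p \<in> topspace ?P. mul (snd p) (fst p) \<in> A}"
  define P2 where "P2 = {p \<in> topspace ?P. fst p \<in> A}"
  have P1: "openin ?P P1" "closedin ?P P1" unfolding P1_def
    using openin_continuous_map_preimage[OF cf Ao] closedin_continuous_map_preimage[OF cf Ac] by auto
  have P2: "openin ?P P2" "closedin ?P P2" unfolding P2_def
    using openin_continuous_map_preimage[OF continuous_map_fst Ao] closedin_continuous_map_preimage[OF continuous_map_fst Ac] by auto
  have "\<Omega>1 = (P1 \<inter> P2) \<union> ((topspace ?P - P1) \<inter> (topspace ?P - P2))"
    unfolding \<Omega>1_def P1_def P2_def tP by auto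
  moreover have "openin ?P ((P1 \<inter> P2) \<union> ((topspace ?P - P1) \<inter> (topspace ?P - P2)))"
    by (intro openin_Un openin_Int openin_diff openin_topspace P1 P2)
  ultimately have O1o: "openin ?P \<Omega>1" by simp
  have O1e: "G \<times> {e} \<subseteq> \<Omega>1" unfolding \<Omega>1_def by auto
  have dA: "dfn S n (\<lambda>x. x \<in> A)" by (rule dfn_set[OF struct AS])
  have lenA: "x \<in> A \<Longrightarrow> length x = n" for x using AG lenG by blast
  have dO1: "dfn S (n + n) (\<lambda>z. (take n z, drop n z) \<in> \<Omega>1)"
  proof -
    have a: "dfn S (n + n + n) (\<lambda>z. take n (drop n z) \<in> G \<and> take n (drop 0 z) \<in> G \<and> take n (drop (n + n) z) = mul (take n (drop n z)) (take n (drop 0 z)))"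
      by (rule dfn_block3'[where Q = "\<lambda>x y w. x \<in> G \<and> y \<in> G \<and> w = mul x y", OF struct d_mul]) auto
    have b: "dfn S (n + n + n) (\<lambda>z. take n (drop (n + n) z) \<in> A)" by (rule dfn_block1[OF struct dA]) auto
    have c: "dfn S (n + n + n) (\<lambda>z. take n (drop 0 z) \<in> A)" by (rule dfn_block1[OF struct dA]) auto
    have "dfn S (n + n) (\<lambda>z. \<exists>w. length w = n \<and> ((take n (drop n z) \<in> G \<and> take n z \<in> G \<and> w = mul (take n (drop n z)) (take n z))
         \<and> (w \<in> A \<longleftrightarrow> take n z \<in> A)))"
      by (rule dfn_exn_blk[OF struct dfn_and[OF struct a dfn_iff[OF struct b c]]]) simp
    then show ?thesis
    proof (rule dfn_mono)
      fix z :: "'m list" assume lz: "length z = n + n"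
      have tz: "take n (drop n z) = drop n z" using lz by simp
      show "(\<exists>w. length w = n \<and> ((take n (drop n z) \<in> G \<and> take n z \<in> G \<and> w = mul (take n (drop n z)) (take n z))
         \<and> (w \<in> A \<longleftrightarrow> take n z \<in> A))) = ((take n z, drop n z) \<in> \<Omega>1)"
        unfolding tz \<Omega>1_def by auto
    qed
  qed
  obtain V1 where V1: "openin \<tau> V1" "e \<in> V1" "G \<times> V1 \<subseteq> \<Omega>1" using tube[OF O1o O1e dO1] by blast
  define H where "H = {b \<in> G. \<forall>u\<in>G. (mul b u \<in> A) = (u \<in> A)}"
  have V1G: "V1 \<subseteq> G" using V1 openin_subset top by metis
  have V1H: "V1 \<subseteq> H" unfolding H_def using V1 V1G unfolding \<Omega>1_def by auto
  have dH: "dfn S n (\<lambda>b. b \<in> H)"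
  proof -
    have a: "dfn S (n + n) (\<lambda>z. (take n (drop n z), take n (drop 0 z)) \<in> \<Omega>1)"
      by (rule dfn_block2'[where Q = "\<lambda>u b. (u, b) \<in> \<Omega>1", OF struct dO1]) auto
    have b: "dfn S (n + n) (\<lambda>z. take n (drop n z) \<in> G)" by (rule dfn_block1[OF struct d_G]) auto
    have "dfn S n (\<lambda>b. \<forall>u. length u = n \<longrightarrow> (u \<in> G \<longrightarrow> (u, b) \<in> \<Omega>1))"
      by (rule dfn_alln_blk[OF struct dfn_imp[OF struct b a]]) simp
    then have "dfn S n (\<lambda>b. b \<in> G \<and> (\<forall>u. length u = n \<longrightarrow> (u \<in> G \<longrightarrow> (u, b) \<in> \<Omega>1)))"
      by (rule dfn_and[OF struct d_G])
    then show ?thesis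
    proof (rule dfn_mono)
      fix b :: "'m list" assume lb: "length b = n"
      show "(b \<in> G \<and> (\<forall>u. length u = n \<longrightarrow> (u \<in> G \<longrightarrow> (u, b) \<in> \<Omega>1))) = (b \<in> H)"
        unfolding \<Omega>1_def H_def using lenG by auto
    qed
  qed
  have HD: "h \<in> G" "u \<in> G \<Longrightarrow> (mul h u \<in> A) = (u \<in> A)" if "h \<in> H" for h u
    using that unfolding H_def by blast+
  have Hmul: "mul h1 h2 \<in> H" if "h1 \<in> H" "h2 \<in> H" for h1 h2
  proof -
    have g: "h1 \<in> G" "h2 \<in> G" using HD that by blast+
    have "(mul (mul h1 h2) u \<in> A) = (u \<in> A)" if u: "u \<in> G" for u
    proof -
      have "mul (mul h1 h2) u = mul h1 (mul h2 u)" using g u by simp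
      moreover have "(mul h1 (mul h2 u) \<in> A) = (mul h2 u \<in> A)" using HD(2)[OF \<open>h1 \<in> H\<close>] g u by simp
      moreover have "(mul h2 u \<in> A) = (u \<in> A)" using HD(2)[OF \<open>h2 \<in> H\<close> u] .
      ultimately show ?thesis by simp
    qed
    then show ?thesis unfolding H_def using g by simp
  qed
  have Hiv: "iv h \<in> H" if "h \<in> H" for h
  proof -
    have hG: "h \<in> G" using HD that by blast
    have "(mul (iv h) u \<in> A) = (u \<in> A)" if u: "u \<in> G" for u
    proof -
      have "(mul h (mul (iv h) u) \<in> A) = (mul (iv h) u \<in> A)" using HD(2)[OF \<open>h \<in> H\<close> mcl[OF ivcl[OF hG] u]] .
      moreover have "mul h (mul (iv h) u) = u" using hG u by simp
      ultimately show ?thesis by simp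
    qed
    then show ?thesis unfolding H_def using hG by simp
  qed
  define I where "I = \<tau> interior_of H"
  have eI: "e \<in> I" unfolding I_def using interior_of_maximal[OF V1H V1(1)] V1(2) by (rule subsetD)
  have IH: "I \<subseteq> H" unfolding I_def by (rule interior_of_subset)
  have dI: "dfn S n (\<lambda>x. x \<in> I)"
  proof -
    have a: "dfn S (n + k + n) (\<lambda>z. take k (drop n z) \<in> T \<and> take n (drop (n + k) z) \<in> B (take k (drop n z)))"
      by (rule dfn_block2'[where Q = "\<lambda>t x. t \<in> T \<and> x \<in> B t", OF struct d_F]) auto
    have b: "dfn S (n + k + n) (\<lambda>z. take n (drop (n + k) z) \<in> H)" by (rule dfn_block1[OF struct dH]) auto
    have c: "dfn S (n + k) (\<lambda>z. \<forall>y. length y = n \<longrightarrow> (take k (drop n z) \<in> T \<and> y \<in> B (take k (drop n z)) \<longrightarrow> y \<in> H))"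
      by (rule dfn_alln_blk[OF struct dfn_imp[OF struct a b]]) simp
    have d: "dfn S (n + k) (\<lambda>z. take k (drop n z) \<in> T \<and> take n (drop 0 z) \<in> B (take k (drop n z)))"
      by (rule dfn_block2'[where Q = "\<lambda>t x. t \<in> T \<and> x \<in> B t", OF struct d_F]) auto
    have "dfn S n (\<lambda>x. \<exists>s. length s = k \<and> ((s \<in> T \<and> x \<in> B s) \<and> (\<forall>y. length y = n \<longrightarrow> (s \<in> T \<and> y \<in> B s \<longrightarrow> y \<in> H))))"
      by (rule dfn_exn_blk[OF struct dfn_and[OF struct d c]]) simp
    then show ?thesis
    proof (rule dfn_mono)
      fix x :: "'m list" assume lx: "length x = n"
      have "(\<exists>s. length s = k \<and> ((s \<in> T \<and> x \<in> B s) \<and> (\<forall>y. length y = n \<longrightarrow> (s \<in> T \<and> y \<in> B s \<longrightarrow> y \<in> H))))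
        \<longleftrightarrow> (\<exists>s\<in>T. x \<in> B s \<and> B s \<subseteq> H)"
      proof
        assume "\<exists>s. length s = k \<and> ((s \<in> T \<and> x \<in> B s) \<and> (\<forall>y. length y = n \<longrightarrow> (s \<in> T \<and> y \<in> B s \<longrightarrow> y \<in> H)))"
        then obtain s where s: "s \<in> T" "x \<in> B s" "\<forall>y. length y = n \<longrightarrow> (s \<in> T \<and> y \<in> B s \<longrightarrow> y \<in> H)" by blast
        have "B s \<subseteq> H"
        proof
          fix y assume "y \<in> B s"
          moreover then have "length y = n" using Btn s(1) by blast
          ultimately show "y \<in> H" using s by blast
        qed
        then show "\<exists>s\<in>T. x \<in> B s \<and> B s \<subseteq> H" using s by blast
      next
        assume "\<exists>s\<in>T. x \<in> B s \<and> B s \<subseteq> H"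
        then obtain s where s: "s \<in> T" "x \<in> B s" "B s \<subseteq> H" by blast
        moreover have "length s = k" using lenT s(1) by blast
        ultimately show "\<exists>s. length s = k \<and> ((s \<in> T \<and> x \<in> B s) \<and> (\<forall>y. length y = n \<longrightarrow> (s \<in> T \<and> y \<in> B s \<longrightarrow> y \<in> H)))"
          by blast
      qed
      then show "(\<exists>s. length s = k \<and> ((s \<in> T \<and> x \<in> B s) \<and> (\<forall>y. length y = n \<longrightarrow> (s \<in> T \<and> y \<in> B s \<longrightarrow> y \<in> H)))) = (x \<in> I)"
        unfolding I_def int_basis .
    qed
  qed
  define \<Omega>2 where "\<Omega>2 = {p \<in> G \<times> G. cj (fst p) (snd p) \<in> I}"
  have cc: "continuous_map ?P \<tau> (\<lambda>p. cj (fst p) (snd p))"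
    unfolding cj_def by (intro cm_mul cm_iv continuous_map_fst continuous_map_snd)
  have O2o: "openin ?P \<Omega>2"
    using openin_continuous_map_preimage[OF cc openin_interior_of[of \<tau> H]] unfolding \<Omega>2_def I_def tP by simp
  have O2e: "G \<times> {e} \<subseteq> \<Omega>2" unfolding \<Omega>2_def using eI by (auto simp: cj_def)
  have dO2: "dfn S (n + n) (\<lambda>z. (take n z, drop n z) \<in> \<Omega>2)"
  proof -
    have b: "dfn S (n + n + n) (\<lambda>z. take n (drop (n + n) z) \<in> I)" by (rule dfn_block1[OF struct dI]) auto
    have "dfn S (n + n) (\<lambda>z. \<exists>c. length c = n \<and> ((take n z \<in> G \<and> take n (drop n z) \<in> G \<and> c = cj (take n z) (take n (drop n z))) \<and> c \<in> I))"
      by (rule dfn_exn_blk[OF struct dfn_and[OF struct d_conj b]]) simp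
    then show ?thesis
    proof (rule dfn_mono)
      fix z :: "'m list" assume lz: "length z = n + n"
      have tz: "take n (drop n z) = drop n z" using lz by simp
      show "(\<exists>c. length c = n \<and> ((take n z \<in> G \<and> take n (drop n z) \<in> G \<and> c = cj (take n z) (take n (drop n z))) \<and> c \<in> I)) = ((take n z, drop n z) \<in> \<Omega>2)"
        unfolding tz \<Omega>2_def using lenG cjcl by auto
    qed
  qed
  obtain W where W: "openin \<tau> W" "e \<in> W" "G \<times> W \<subseteq> \<Omega>2" using tube[OF O2o O2e dO2] by blast
  define K where "K = {x \<in> G. \<forall>g\<in>G. cj g x \<in> H}"
  have WG: "W \<subseteq> G" using W openin_subset top by metis
  have WK: "W \<subseteq> K"
  proof
    fix x assume x: "x \<in> W"
    have "cj g x \<in> H" if g: "g \<in> G" for g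
    proof -
      have "(g, x) \<in> \<Omega>2" using W(3) g x by blast
      then have "cj g x \<in> I" unfolding \<Omega>2_def by simp
      then show ?thesis using IH by blast
    qed
    then show "x \<in> K" unfolding K_def using x WG by blast
  qed
  have dK: "dfn S n (\<lambda>x. x \<in> K)"
  proof -
    have a: "dfn S (n + n + n) (\<lambda>z. take n (drop n z) \<in> G \<and> take n (drop 0 z) \<in> G \<and> take n (drop (n + n) z) = cj (take n (drop n z)) (take n (drop 0 z)))"
      by (rule dfn_block3'[where Q = "\<lambda>g x c. g \<in> G \<and> x \<in> G \<and> c = cj g x", OF struct d_conj]) auto
    have b: "dfn S (n + n + n) (\<lambda>z. take n (drop (n + n) z) \<in> H)" by (rule dfn_block1[OF struct dH]) auto
    have c: "dfn S (n + n) (\<lambda>z. \<exists>c. length c = n \<and> ((take n (drop n z) \<in> G \<and> take n z \<in> G \<and> c = cj (take n (drop n z)) (take n z)) \<and> c \<in> H))"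
      by (rule dfn_exn_blk[OF struct dfn_and[OF struct a b]]) simp
    have d: "dfn S (n + n) (\<lambda>z. take n (drop n z) \<in> G)" by (rule dfn_block1[OF struct d_G]) auto
    have "dfn S n (\<lambda>x. \<forall>g. length g = n \<longrightarrow> (g \<in> G \<longrightarrow> (\<exists>c. length c = n \<and> ((g \<in> G \<and> x \<in> G \<and> c = cj g x) \<and> c \<in> H))))"
      by (rule dfn_alln_blk[OF struct dfn_imp[OF struct d c]]) simp
    then have "dfn S n (\<lambda>x. x \<in> G \<and> (\<forall>g. length g = n \<longrightarrow> (g \<in> G \<longrightarrow> (\<exists>c. length c = n \<and> ((g \<in> G \<and> x \<in> G \<and> c = cj g x) \<and> c \<in> H)))))"
      by (rule dfn_and[OF struct d_G])
    then show ?thesis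
    proof (rule dfn_mono)
      fix x :: "'m list" assume lx: "length x = n"
      show "(x \<in> G \<and> (\<forall>g. length g = n \<longrightarrow> (g \<in> G \<longrightarrow> (\<exists>c. length c = n \<and> ((g \<in> G \<and> x \<in> G \<and> c = cj g x) \<and> c \<in> H))))) = (x \<in> K)"
      proof
        assume h: "x \<in> G \<and> (\<forall>g. length g = n \<longrightarrow> (g \<in> G \<longrightarrow> (\<exists>c. length c = n \<and> ((g \<in> G \<and> x \<in> G \<and> c = cj g x) \<and> c \<in> H))))"
        have "cj g x \<in> H" if g: "g \<in> G" for g
        proof -
          have "length g = n" using lenG g by blast
          then obtain c where "c = cj g x" "c \<in> H" using h g by blast
          then show ?thesis by simp
        qed
        then show "x \<in> K" unfolding K_def using h by blast
      next
        assume "x \<in> K"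
        then have x: "x \<in> G" "\<And>g. g \<in> G \<Longrightarrow> cj g x \<in> H" unfolding K_def by blast+
        have "\<exists>c. length c = n \<and> ((g \<in> G \<and> x \<in> G \<and> c = cj g x) \<and> c \<in> H)" if g: "g \<in> G" for g
        proof (intro exI conjI)
          show "length (cj g x) = n" using lenG cjcl[OF g x(1)] by blast
        qed (use g x in auto)
        then show "x \<in> G \<and> (\<forall>g. length g = n \<longrightarrow> (g \<in> G \<longrightarrow> (\<exists>c. length c = n \<and> ((g \<in> G \<and> x \<in> G \<and> c = cj g x) \<and> c \<in> H))))"
          using x(1) by blast
      qed
    qed
  qed
  have KS: "K \<in> S n"
  proof -
    have "{x. length x = n \<and> x \<in> K} = K" unfolding K_def using lenG by auto
    then show ?thesis using set_dfn[OF dK] by simp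
  qed
  have cj_mul: "cj g (mul a b) = mul (cj g a) (cj g b)" if "g \<in> G" "a \<in> G" "b \<in> G" for g a b
    using that by (simp add: cj_def)
  have cj_iv: "cj g (iv a) = iv (cj g a)" if "g \<in> G" "a \<in> G" for g a
    using that by (simp add: cj_def)
  have cj_conj: "cj g (mul (mul x h) (iv x)) = cj (mul (iv x) g) h" if "g \<in> G" "x \<in> G" "h \<in> G" for g x h
    using that by (simp add: cj_def)
  have Hiv': "iv h \<in> H" if "h \<in> H" for h using Hiv that .
  have KD: "x \<in> G" "g \<in> G \<Longrightarrow> cj g x \<in> H" if "x \<in> K" for x g
    using that unfolding K_def by blast+
  have KI: "x \<in> K" if "x \<in> G" "\<And>g. g \<in> G \<Longrightarrow> cj g x \<in> H" for x
    using that unfolding K_def by blast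
  have Kiv: "iv a \<in> K" if a: "a \<in> K" for a
  proof (rule KI)
    have aG: "a \<in> G" using KD(1)[OF a] .
    show "iv a \<in> G" using aG by simp
    fix g assume g: "g \<in> G"
    have "cj g (iv a) = iv (cj g a)" using cj_iv[OF g aG] .
    moreover have "iv (cj g a) \<in> H" using Hiv[OF KD(2)[OF a g]] .
    ultimately show "cj g (iv a) \<in> H" by simp
  qed
  have Kmul: "mul a b \<in> K" if a: "a \<in> K" and b: "b \<in> K" for a b
  proof (rule KI)
    have aG: "a \<in> G" "b \<in> G" using KD(1)[OF a] KD(1)[OF b] by auto
    show "mul a b \<in> G" using aG by simp
    fix g assume g: "g \<in> G"
    have "cj g (mul a b) = mul (cj g a) (cj g b)" using cj_mul[OF g aG] .
    moreover have "mul (cj g a) (cj g b) \<in> H" using Hmul[OF KD(2)[OF a g] KD(2)[OF b g]] .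
    ultimately show "cj g (mul a b) \<in> H" by simp
  qed
  have Kconj: "mul (mul x h) (iv x) \<in> K" if x: "x \<in> G" and h: "h \<in> K" for x h
  proof (rule KI)
    have hG: "h \<in> G" using KD(1)[OF h] .
    show "mul (mul x h) (iv x) \<in> G" using x hG by simp
    fix g assume g: "g \<in> G"
    have "cj g (mul (mul x h) (iv x)) = cj (mul (iv x) g) h" using cj_conj[OF g x hG] .
    moreover have "cj (mul (iv x) g) h \<in> H" using KD(2)[OF h] x g by simp
    ultimately show "cj g (mul (mul x h) (iv x)) \<in> H" by simp
  qed
  have eK: "e \<in> K"
  proof (rule KI)
    show "e \<in> G" by simp
    fix g assume "g \<in> G"
    then have "cj g e = e" by (simp add: cj_def)
    then show "cj g e \<in> H" using eI IH by auto
  qed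
  have sub: "subgroup K (grp G mul e)"
  proof (rule Gp.subgroupI)
    show "K \<subseteq> carrier (grp G mul e)" using KD(1) by auto
    show "K \<noteq> {}" using eK by blast
  next
    fix a assume "a \<in> K"
    then show "inv\<^bsub>grp G mul e\<^esub> a \<in> K" unfolding iv_def[symmetric] by (rule Kiv)
  next
    fix a b assume "a \<in> K" "b \<in> K"
    then show "a \<otimes>\<^bsub>grp G mul e\<^esub> b \<in> K" using Kmul by simp
  qed
  have nK: "normal K (grp G mul e)"
    unfolding Gp.normal_inv_iff
  proof (intro conjI sub ballI)
    fix x h assume x: "x \<in> carrier (grp G mul e)" and h: "h \<in> K"
    then show "x \<otimes>\<^bsub>grp G mul e\<^esub> h \<otimes>\<^bsub>grp G mul e\<^esub> inv\<^bsub>grp G mul e\<^esub> x \<in> K"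
      unfolding iv_def[symmetric] using Kconj by simp
  qed
  have "K = {e} \<or> K = G" using simple KS nK unfolding definably_simple_def by blast
  moreover have "K \<noteq> G"
  proof
    assume KG: "K = G"
    obtain a where a: "a \<in> A" using Ane by blast
    have "\<not> G \<subseteq> A" using AG AnG by blast
    then obtain y where y: "y \<in> G" "y \<notin> A" by blast
    have aG: "a \<in> G" using AG a by blast
    have yaG: "mul y (iv a) \<in> G" using y aG by simp
    then have "mul y (iv a) \<in> K" using KG by simp
    then have "cj e (mul y (iv a)) \<in> H" using KD(2) ecl by blast
    moreover have "cj e (mul y (iv a)) = mul y (iv a)" using yaG by (simp add: cj_def)
    ultimately have yaH: "mul y (iv a) \<in> H" by simp
    have "(mul (mul y (iv a)) a \<in> A) = (a \<in> A)" by (rule HD(2)[OF yaH aG])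
    moreover have "mul (mul y (iv a)) a = y" using y aG by simp
    ultimately show False using a y by simp
  qed
  ultimately have "K = {e}" by blast
  then have "W = {e}" using WK W(2) by blast
  then have eo: "openin \<tau> {e}" using W(1) by simp
  have "openin \<tau> {x}" if x: "x \<in> G" for x
  proof -
    have cx: "continuous_map \<tau> \<tau> (\<lambda>y. mul (iv x) y)"
      by (intro cm_mul continuous_map_id[unfolded id_def]) (simp add: top x)
    have iff: "mul (iv x) y = e \<longleftrightarrow> y = x" if y: "y \<in> G" for y
      using invuniq[OF ivcl[OF x] y] x by simp
    have "{y \<in> topspace \<tau>. mul (iv x) y \<in> {e}} = {x}"
    proof
      show "{y \<in> topspace \<tau>. mul (iv x) y \<in> {e}} \<subseteq> {x}" using iff top by auto
      show "{x} \<subseteq> {y \<in> topspace \<tau>. mul (iv x) y \<in> {e}}" using x top by simp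
    qed
    then show ?thesis using openin_continuous_map_preimage[OF cx eo] by simp
  qed
  then have "discrete_topology G = \<tau>" unfolding discrete_topology_unique using top by blast
  then show ?thesis by (rule sym)
qed

end

theorem theorem5p4:
  fixes S :: "nat \<Rightarrow> ('m::{group_add, dense_linorder, no_top, no_bot}) list set set"
    and n :: nat and G :: "'m list set" and mul :: "'m list \<Rightarrow> 'm list \<Rightarrow> 'm list"
    and e :: "'m list" and \<tau> :: "'m list topology"
  assumes ordered_group: "\<forall>a b c :: 'm. a < b \<longrightarrow> c + a < c + b \<and> a + c < b + c"
    and expansion: "expansion_of_ordered_group S"
    and def_complete: "definably_complete S"
    and loc_o_min: "locally_o_minimal S"
    and top_group: "definable_topological_group S n G mul e \<tau>"
    and simple: "definably_simple S n G mul e"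
    and regular: "regular_space \<tau>"
    and hausdorff: "Hausdorff_space \<tau>"
    and compact: "definably_compact S n \<tau>"
  shows "\<tau> = discrete_topology G \<or> definably_connected S n \<tau>"
proof -
  have struct: "is_structure S" using expansion unfolding expansion_of_ordered_group_def by blast
  from top_group have grp: "group (grp G mul e)" and GS: "G \<in> S n"
    and GrS: "{x @ y @ mul x y | x y. x \<in> G \<and> y \<in> G} \<in> S (n + n + n)"
    and dtop: "definable_topology S n G \<tau>"
    and cmul: "continuous_map (prod_topology \<tau> \<tau>) \<tau> (\<lambda>(x, y). mul x y)"
    and cinv: "continuous_map \<tau> \<tau> (\<lambda>x. inv\<^bsub>grp G mul e\<^esub> x)"
    unfolding definable_topological_group_def definable_group_def by auto
  from dtop obtain k T B where top: "topspace \<tau> = G" and fam: "definable_family S k n T B"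
    and Bopen: "\<forall>t\<in>T. openin \<tau> (B t)"
    and basis: "\<forall>U. openin \<tau> U \<longrightarrow> (\<forall>x\<in>U. \<exists>t\<in>T. x \<in> B t \<and> B t \<subseteq> U)"
    unfolding definable_topology_def by blast
  from fam have TS: "T \<in> S k" and FS: "{t @ x | t x. t \<in> T \<and> x \<in> B t} \<in> S (k + n)"
    unfolding definable_family_def by auto
  interpret D: dsetup S n G mul e \<tau> k T B
    by (rule dsetup.intro[OF struct grp GS GrS top TS FS Bopen basis cmul cinv compact])
  show ?thesis
  proof (rule disjCI)
    assume nc: "\<not> definably_connected S n \<tau>"
    then obtain A where A: "A \<in> S n" "A \<subseteq> topspace \<tau>" "openin \<tau> A" "closedin \<tau> A" "A \<noteq> {}" "A \<noteq> topspace \<tau>"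
      unfolding definably_connected_def by blast
    show "\<tau> = discrete_topology G"
      by (rule D.main[OF A(1) _ A(3) A(4) A(5) _ simple]) (use A(2) A(6) top in auto)
  qed
qed

end
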